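(* Suppose $f$ is continuously differentiable with $\nabla f$ Lipschitz continuous with constant $L_{\nabla f}$. Let $\boldsymbol{x}^0\in\mathcal{C}$, $p\le n$, $\boldsymbol{D}\in\mathbb{R}^{n\times p}$ of full column rank with QR-factorization $\boldsymbol{D}=\boldsymbol{Q}\boldsymbol{R}$, $\boldsymbol{R}=[\boldsymbol{r}_1\cdots\boldsymbol{r}_p]$, $\overline{\mathrm{diam}}(\boldsymbol{R})=\max_{1\le i\le p}\|\boldsymbol{r}_i\|$ and $\widehat{\boldsymbol{R}}=\boldsymbol{R}/\overline{\mathrm{diam}}(\boldsymbol{R})$. Then for all $\widehat{\boldsymbol{s}}\in\boldsymbol{Q}^\top(\mathcal{C}-\boldsymbol{x}^0)$ with $\|\widehat{\boldsymbol{s}}\|\le\overline{\mathrm{diam}}(\boldsymbol{R})$, $$\max_{\substack{\boldsymbol{d}\in\boldsymbol{Q}^\top(\mathcal{C}-\boldsymbol{x}^0)\\\|\boldsymbol{d}\|\le1}}\left|\left(\boldsymbol{Q}^\top\nabla f(\boldsymbol{x}^0+\boldsymbol{Q}\widehat{\boldsymbol{s}})-\nabla\widehat m(\widehat{\boldsymbol{s}})\right)^\top\boldsymbol{d}\right|\le\left(\tfrac12L_{\nabla f}\left(2+\sqrt{p}\,\|\widehat{\boldsymbol{R}}^{-1}\|_{\boldsymbol{x}^0,\mathcal{C},\boldsymbol{D}}\right)\right)\overline{\mathrm{diam}}(\boldsymbol{R})$$ and $$\left|f(\boldsymbol{x}^0+\boldsymbol{Q}\widehat{\boldsymbol{s}})-\widehat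 m(\widehat{\boldsymbol{s}})\right|\le\left(\tfrac12L_{\nabla f}\left(1+\sqrt{p}\,\|\widehat{\boldsymbol{R}}^{-1}\|_{\boldsymbol{x}^0,\mathcal{C},\boldsymbol{D}}\right)\right)\overline{\mathrm{diam}}(\boldsymbol{R})^2.$$ In particular, $\widehat m$ belongs to a class of $(\mathcal{C},\boldsymbol{Q})$-fully linear models of $f$ at $\boldsymbol{x}^0$ parametrized by $\overline{\mathrm{diam}}(\boldsymbol{R})$, with constants $\kappa_{ef}=\frac12L_{\nabla f}(1+\sqrt{p}\|\widehat{\boldsymbol{R}}^{-1}\|_{\boldsymbol{x}^0,\mathcal{C},\boldsymbol{D}})$ and $\kappa_{eg}=\frac12L_{\nabla f}(2+\sqrt{p}\|\widehat{\boldsymbol{R}}^{-1}\|_{\boldsymbol{x}^0,\mathcal{C},\boldsymbol{D}})$.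
   Context: $f:\mathbb{R}^n\to\mathbb{R}$ and $\mathcal{C}\subseteq\mathbb{R}^n$ is closed, convex, with nonempty interior. $\|\cdot\|$ is the Euclidean norm for vectors and spectral norm for matrices. QR-factorization $\boldsymbol{D}=\boldsymbol{Q}\boldsymbol{R}$: $\boldsymbol{Q}\in\mathbb{R}^{n\times p}$ with orthonormal columns, $\boldsymbol{R}\in\mathbb{R}^{p\times p}$ (invertible since $\boldsymbol{D}$ has full column rank). $\boldsymbol{Q}^\top(\mathcal{C}-\boldsymbol{x})=\{\boldsymbol{Q}^\top(\boldsymbol{z}-\boldsymbol{x}):\boldsymbol{z}\in\mathcal{C}\}$. Let $\widehat f(\widehat{\boldsymbol{s}})=f(\boldsymbol{x}^0+\boldsymbol{Q}\widehat{\boldsymbol{s}})$ and $\widehat m(\widehat{\boldsymbol{s}})=\widehat f(\boldsymbol{0}_p)+\nabla_S\widehat f(\boldsymbol{0}_p;\boldsymbol{R})^\top\widehat{\boldsymbol{s}}$, where the generalized simplex gradient is $\nabla_S\widehat f(\boldsymbol{0}_p;\boldsymbol{R})=(\boldsymbol{R}^\top)^\dagger\boldsymbol{\delta}$ with $\boldsymbol{\delta}_i=\widehat f(\boldsymbol{r}_i)-\widehat f(\boldsymbol{0}_p)$ and $\dagger$ the Moore–Penrose pseudoinverse. Geometry measure: for $\boldsymbol{M}\in\mathbb{R}^{m\times p}$, $\|\boldsymbol{M}\|_{\boldsymbol{x}^0,\mathcal{C},\boldsymbol{D}}=\frac{1}{\min\{\overline{\mathrm{diam}}(\boldsymbol{R}),1\}}\max\{\|\boldsymbol{M}\boldsymbol{w}\|:\boldsymbol{w}\in\boldsymbol{Q}^\top(\mathcal{C}-\boldsymbol{x}^0),\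 \|\boldsymbol{w}\|\le\min\{\overline{\mathrm{diam}}(\boldsymbol{R}),1\}\}$. Definition: given $\overline\Delta>0$, $\boldsymbol{x}\in\mathcal{C}$, continuously differentiable $f$ and $\boldsymbol{Q}\in\mathbb{R}^{n\times p}$ with orthonormal columns, a family $\{\widehat m_\Delta:\mathbb{R}^p\to\mathbb{R}\}_{\Delta\in(0,\overline\Delta]}$ is a class of $(\mathcal{C},\boldsymbol{Q})$-fully linear models of $f$ at $\boldsymbol{x}$ parameterized by $\Delta$ if there exist $\kappa_{ef},\kappa_{eg}>0$ such that for all $\Delta\in(0,\overline\Delta]$ and $\widehat{\boldsymbol{s}}\in\boldsymbol{Q}^\top(\mathcal{C}-\boldsymbol{x})$ with $\|\widehat{\boldsymbol{s}}\|\le\Delta$: $|f(\boldsymbol{x}+\boldsymbol{Q}\widehat{\boldsymbol{s}})-\widehat m_\Delta(\widehat{\boldsymbol{s}})|\le\kappa_{ef}\Delta^2$ and $\max_{\boldsymbol{d}\in\boldsymbol{Q}^\top(\mathcal{C}-\boldsymbol{x}),\|\boldsymbol{d}\|\le1}|(\boldsymbol{Q}^\top\nabla f(\boldsymbol{x}+\boldsymbol{Q}\widehat{\boldsymbol{s}})-\nabla\widehat m_\Delta(\widehat{\boldsymbol{s}}))^\top\boldsymbol{d}|\le\kappa_{eg}\Delta$. *)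

theory Defs
  imports "HOL-Analysis.Analysis"
begin

text \<open>Matrices: an m x k real matrix is real^'k^'m (rows indexed by 'm).\<close>

definition pinv :: "real^'k^'m \<Rightarrow> real^'m^'k" where
  "pinv A = (THE X. A ** X ** A = A \<and> X ** A ** X = X \<and>
                    transpose (A ** X) = A ** X \<and> transpose (X ** A) = X ** A)"

definition proj_set :: "real^'p^'n \<Rightarrow> (real^'n) set \<Rightarrow> real^'n \<Rightarrow> (real^'p) set" where
  "proj_set Q C x = {transpose Q *v (z - x) | z. z \<in> C}"

definition diam_bar :: "real^'p^'p \<Rightarrow> real" where
  "diam_bar R = Max {norm (column i R) | i. True}"

definition simplex_grad :: "(real^'p \<Rightarrow> real) \<Rightarrow> real^'p^'p \<Rightarrow> real^'p" where
  "simplex_grad fh R = pinv (transpose R) *v (\<chi> i. fh (column i R) - fh 0)"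

text \<open>Geometry measure ||M||_{x0,C,D}, where D = Q R.\<close>
definition geom_norm :: "real^'n \<Rightarrow> (real^'n) set \<Rightarrow> real^'p^'n \<Rightarrow> real^'p^'p \<Rightarrow> real^'p^'m \<Rightarrow> real" where
  "geom_norm x0 C Q R M =
     (1 / min (diam_bar R) 1) *
     Sup {norm (M *v w) | w. w \<in> proj_set Q C x0 \<and> norm w \<le> min (diam_bar R) 1}"

definition fully_linear_bounds ::
  "(real^'n \<Rightarrow> real) \<Rightarrow> (real^'n \<Rightarrow> real^'n) \<Rightarrow> real^'n \<Rightarrow> (real^'n) set \<Rightarrow> real^'p^'n
    \<Rightarrow> (real^'p \<Rightarrow> real) \<Rightarrow> (real^'p \<Rightarrow> real^'p) \<Rightarrow> real \<Rightarrow> real \<Rightarrow> real \<Rightarrow> bool" where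
  "fully_linear_bounds f gradf x C Q m gm \<Delta> kef keg \<longleftrightarrow>
     (\<forall>s \<in> proj_set Q C x. norm s \<le> \<Delta> \<longrightarrow>
        \<bar>f (x + Q *v s) - m s\<bar> \<le> kef * \<Delta>\<^sup>2 \<and>
        (\<forall>d \<in> proj_set Q C x. norm d \<le> 1 \<longrightarrow>
           \<bar>(transpose Q *v gradf (x + Q *v s) - gm s) \<bullet> d\<bar> \<le> keg * \<Delta>))"

end

theory Submission
  imports Defs
begin


lemma inv_props:
  fixes A :: "real^'n^'n"
  assumes "invertible A"
  shows "A ** matrix_inv A = mat 1 \<and> matrix_inv A ** A = mat 1"
  using assms unfolding invertible_def matrix_inv_def by (rule someI_ex)

lemma norm_Q:
  fixes Q :: "real^'p^'n"
  assumes "transpose Q ** Q = mat 1"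
  shows "norm (Q *v w) = norm w"
proof -
  have "(Q *v w) \<bullet> (Q *v w) = (w v* transpose Q) \<bullet> (Q *v w)" by (simp only: vector_transpose_matrix)
  also have "\<dots> = w \<bullet> (transpose Q *v (Q *v w))" by (rule dot_lmul_matrix)
  also have "\<dots> = w \<bullet> w" by (simp add: matrix_vector_mul_assoc assms)
  finally show ?thesis by (simp add: norm_eq_sqrt_inner)
qed

lemma norm_le_sqrt_card:
  fixes e :: "real^'p"
  assumes "\<And>i. \<bar>e $ i\<bar> \<le> c"
  shows "norm e \<le> sqrt (real CARD('p)) * c"
proof -
  have c0: "0 \<le> c" using assms[of undefined] by linarith
  have sq: "(e $ i)\<^sup>2 \<le> c\<^sup>2" for i
    using power_mono[OF assms[of i] abs_ge_zero, of 2] by simp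
  have "(norm e)\<^sup>2 = (\<Sum>i\<in>UNIV. (e $ i)\<^sup>2)"
    by (simp add: norm_vec_def L2_set_def) (simp add: sum_nonneg)
  also have "\<dots> \<le> (\<Sum>i\<in>(UNIV::'p set). c\<^sup>2)"
    by (rule sum_mono) (rule sq)
  also have "\<dots> = real CARD('p) * c\<^sup>2" by simp
  also have "\<dots> = (sqrt (real CARD('p)) * c)\<^sup>2"
    by (simp only: power_mult_distrib real_sqrt_pow2[OF of_nat_0_le_iff])
  finally have le: "(norm e)\<^sup>2 \<le> (sqrt (real CARD('p)) * c)\<^sup>2" .
  have "0 \<le> sqrt (real CARD('p)) * c" using c0 by simp
  then show ?thesis using le by (rule power2_le_imp_le[rotated])
qed



lemma taylor_bound:
  fixes f :: "'a::real_inner \<Rightarrow> real" and gradf :: "'a \<Rightarrow> 'a"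
  assumes deriv: "\<And>x. (f has_derivative (\<lambda>h. gradf x \<bullet> h)) (at x)"
    and lip: "L-lipschitz_on UNIV gradf"
  shows "\<bar>f (x + h) - f x - gradf x \<bullet> h\<bar> \<le> L / 2 * (norm h)\<^sup>2"
proof -
  have L0: "0 \<le> L" using lip by (rule lipschitz_on_nonneg)
  have D: "((\<lambda>t. f (x + t *\<^sub>R h)) has_real_derivative gradf (x + t *\<^sub>R h) \<bullet> h) (at t)" for t
  proof -
    have "((\<lambda>t. x + t *\<^sub>R h) has_derivative (\<lambda>t. t *\<^sub>R h)) (at t)"
      by (auto intro!: derivative_eq_intros)
    from has_derivative_compose[OF this deriv]
    have "((\<lambda>t. f (x + t *\<^sub>R h)) has_derivative (\<lambda>k. gradf (x + t *\<^sub>R h) \<bullet> (k *\<^sub>R h))) (at t)" .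
    then show ?thesis by (rule has_derivative_imp_has_field_derivative) simp
  qed
  have B: "\<bar>(gradf (x + t *\<^sub>R h) - gradf x) \<bullet> h\<bar> \<le> L * t * (norm h)\<^sup>2" if "0 \<le> t" for t
  proof -
    have "\<bar>(gradf (x + t *\<^sub>R h) - gradf x) \<bullet> h\<bar> \<le> norm (gradf (x + t *\<^sub>R h) - gradf x) * norm h"
      by (rule Cauchy_Schwarz_ineq2)
    also have "\<dots> \<le> (L * norm (t *\<^sub>R h)) * norm h"
      using lipschitz_on_normD[OF lip, of "x + t *\<^sub>R h" x] by (intro mult_right_mono) auto
    also have "\<dots> = L * t * (norm h)\<^sup>2" using that by (simp add: power2_eq_square)
    finally show ?thesis .
  qed
  define u where "u t = f (x + t *\<^sub>R h) - t * (gradf x \<bullet> h) - L / 2 * t\<^sup>2 * (norm h)\<^sup>2" for t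
  define v where "v t = f (x + t *\<^sub>R h) - t * (gradf x \<bullet> h) + L / 2 * t\<^sup>2 * (norm h)\<^sup>2" for t
  have "u 1 \<le> u 0"
  proof (rule DERIV_nonpos_imp_nonincreasing[of 0 1])
    fix t :: real assume t: "0 \<le> t" "t \<le> 1"
    have "(u has_real_derivative gradf (x + t *\<^sub>R h) \<bullet> h - gradf x \<bullet> h - L * t * (norm h)\<^sup>2) (at t)"
      unfolding u_def by (rule derivative_eq_intros D refl | simp)+
    moreover have "gradf (x + t *\<^sub>R h) \<bullet> h - gradf x \<bullet> h - L * t * (norm h)\<^sup>2 \<le> 0"
      using B[OF t(1)] by (simp add: inner_diff_left)
    ultimately show "\<exists>y. (u has_real_derivative y) (at t) \<and> y \<le> 0" by blast
  qed simp
  moreover have "v 0 \<le> v 1"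
  proof (rule DERIV_nonneg_imp_nondecreasing[of 0 1])
    fix t :: real assume t: "0 \<le> t" "t \<le> 1"
    have "(v has_real_derivative gradf (x + t *\<^sub>R h) \<bullet> h - gradf x \<bullet> h + L * t * (norm h)\<^sup>2) (at t)"
      unfolding v_def by (rule derivative_eq_intros D refl | simp)+
    moreover have "gradf (x + t *\<^sub>R h) \<bullet> h - gradf x \<bullet> h + L * t * (norm h)\<^sup>2 \<ge> 0"
      using B[OF t(1)] by (simp add: inner_diff_left)
    ultimately show "\<exists>y. (v has_real_derivative y) (at t) \<and> y \<ge> 0" by blast
  qed simp
  ultimately show ?thesis unfolding u_def v_def abs_le_iff by simp
qed


lemma proj_scale:
  fixes Q :: "real^'p^'n"
  assumes "convex C" "x0 \<in> C" "d \<in> proj_set Q C x0" "0 \<le> t" "t \<le> 1"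
  shows "t *\<^sub>R d \<in> proj_set Q C x0"
proof -
  obtain z where z: "z \<in> C" "d = transpose Q *v (z - x0)"
    using assms(3) unfolding proj_set_def by blast
  have "(1 - t) *\<^sub>R x0 + t *\<^sub>R z \<in> C"
    using assms z(1) by (intro convexD) auto
  moreover have "(1 - t) *\<^sub>R x0 + t *\<^sub>R z - x0 = t *\<^sub>R (z - x0)"
    by (simp add: algebra_simps)
  ultimately show ?thesis
    unfolding proj_set_def using z
    by (metis (mono_tags, lifting) matrix_vector_mult_scaleR mem_Collect_eq)
qed

lemma inner_transpose:
  fixes M :: "real^'p^'n"
  shows "(transpose M *v v) \<bullet> d = v \<bullet> (M *v d)"
  by (simp only: transpose_matrix_vector dot_lmul_matrix)

lemma col_inner:
  fixes R :: "real^'p^'p"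
  shows "(transpose R *v a) $ i = column i R \<bullet> a"
  by (simp add: matrix_vector_mult_def transpose_def column_def inner_vec_def mult.commute)

theorem mainTheorem5:
  fixes f :: "real^'n \<Rightarrow> real" and gradf :: "real^'n \<Rightarrow> real^'n"
    and L :: real and C :: "(real^'n) set" and x0 :: "real^'n"
    and D :: "real^'p^'n" and Q :: "real^'p^'n" and R :: "real^'p^'p"
  assumes deriv: "\<And>x. (f has_derivative (\<lambda>h. gradf x \<bullet> h)) (at x)"
    and cont: "continuous_on UNIV gradf"
    and lip: "L-lipschitz_on UNIV gradf"
    and C_closed: "closed C" and C_convex: "convex C" and C_int: "interior C \<noteq> {}"
    and x0C: "x0 \<in> C"
    and pn: "CARD('p) \<le> CARD('n)"
    and D_rank: "rank D = CARD('p)"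
    and QR: "D = Q ** R"
    and Q_orth: "transpose Q ** Q = mat 1"
  defines "g \<equiv> simplex_grad (\<lambda>s. f (x0 + Q *v s)) R"
    and "mh \<equiv> (\<lambda>s. f x0 + simplex_grad (\<lambda>s. f (x0 + Q *v s)) R \<bullet> s)"
    and "\<Delta> \<equiv> diam_bar R"
    and "\<kappa> \<equiv> geom_norm x0 C Q R (matrix_inv ((1 / diam_bar R) *\<^sub>R R))"
  shows "(\<forall>s \<in> proj_set Q C x0. norm s \<le> \<Delta> \<longrightarrow>
            (\<forall>d \<in> proj_set Q C x0. norm d \<le> 1 \<longrightarrow>
               \<bar>(transpose Q *v gradf (x0 + Q *v s) - g) \<bullet> d\<bar>
                 \<le> (1/2 * L * (2 + sqrt (real CARD('p)) * \<kappa>)) * \<Delta>) \<and>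
            \<bar>f (x0 + Q *v s) - mh s\<bar>
                 \<le> (1/2 * L * (1 + sqrt (real CARD('p)) * \<kappa>)) * \<Delta>\<^sup>2)
         \<and> fully_linear_bounds f gradf x0 C Q mh (\<lambda>_. g) \<Delta>
              (1/2 * L * (1 + sqrt (real CARD('p)) * \<kappa>))
              (1/2 * L * (2 + sqrt (real CARD('p)) * \<kappa>))"
proof -
  have L0: "0 \<le> L" using lip by (rule lipschitz_on_nonneg)
  have rb: "rank R \<le> CARD('p)" using rank_bound[of R] by simp
  have "rank R = CARD('p)"
  proof -
    have "rank (Q ** R) = CARD('p)" using D_rank QR by simp
    then show ?thesis using rank_mul_le_right[of Q R] rb by linarith
  qed
  then have injR: "inj ((*v) R)" by (simp add: full_rank_injective)
  then have invR: "invertible R"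
    using matrix_left_invertible_injective invertible_left_inverse by blast
  define Ri where "Ri = matrix_inv R"
  have RRi: "R ** Ri = mat 1" and RiR: "Ri ** R = mat 1"
    using inv_props[OF invR] Ri_def by auto
  have T1: "transpose R ** transpose Ri = mat 1"
    by (metis RiR matrix_transpose_mul transpose_mat)
  have T2: "transpose Ri ** transpose R = mat 1"
    by (metis RRi matrix_transpose_mul transpose_mat)
  have pinvR: "pinv (transpose R) = transpose Ri"
    unfolding pinv_def
  proof (rule the_equality)
    show "transpose R ** transpose Ri ** transpose R = transpose R \<and>
          transpose Ri ** transpose R ** transpose Ri = transpose Ri \<and>
          transpose (transpose R ** transpose Ri) = transpose R ** transpose Ri \<and>
          transpose (transpose Ri ** transpose R) = transpose Ri ** transpose R"
      by (simp add: T1 T2)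
  next
    fix X assume "transpose R ** X ** transpose R = transpose R \<and>
          X ** transpose R ** X = X \<and>
          transpose (transpose R ** X) = transpose R ** X \<and>
          transpose (X ** transpose R) = X ** transpose R"
    then have X: "transpose R ** X ** transpose R = transpose R" by blast
    have "X = (transpose Ri ** transpose R) ** X ** (transpose R ** transpose Ri)"
      by (simp add: T1 T2)
    also have "\<dots> = transpose Ri ** (transpose R ** X ** transpose R) ** transpose Ri"
      by (simp add: matrix_mul_assoc)
    also have "\<dots> = transpose Ri ** transpose R ** transpose Ri" by (simp only: X)
    also have "\<dots> = transpose Ri" by (simp only: T2 matrix_mul_lid)
    finally show "X = transpose Ri" .
  qed
  have Sfin: "{norm (column i R) | i. True} = range (\<lambda>i. norm (column i R))" by auto
  have col_le: "norm (column i R) \<le> \<Delta>" for i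
    unfolding \<Delta>_def diam_bar_def Sfin by (rule Max_ge) auto
  have colpos: "norm (column i R) > 0" for i
  proof -
    have "column i R \<noteq> 0"
    proof
      assume "column i R = 0"
      then have "R *v axis i 1 = R *v 0" by (simp add: matrix_vector_mult_basis)
      then have "axis i (1::real) = 0" using injR by (meson injD)
      then show False by (simp add: axis_eq_0_iff)
    qed
    then show ?thesis by simp
  qed
  have Dpos: "\<Delta> > 0" using col_le[of undefined] colpos[of undefined] by linarith
  define m where "m = min \<Delta> 1"
  have m0: "0 < m" "m \<le> 1" "m \<le> \<Delta>" using Dpos by (auto simp: m_def)
  define Mh where "Mh = matrix_inv ((1 / diam_bar R) *\<^sub>R R)"
  have Mh_eq: "Mh = \<Delta> *\<^sub>R Ri"
  proof -
    have inv2: "invertible ((1 / \<Delta>) *\<^sub>R R)"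
      using Dpos invR by (intro scalar_invertible) auto
    have A: "Mh ** ((1 / \<Delta>) *\<^sub>R R) = mat 1"
      using inv_props[OF inv2] by (simp add: Mh_def \<Delta>_def)
    have B: "((1 / \<Delta>) *\<^sub>R R) ** (\<Delta> *\<^sub>R Ri) = mat 1"
    proof -
      have "((1 / \<Delta>) *\<^sub>R R) ** (\<Delta> *\<^sub>R Ri) = (\<Delta> *\<^sub>R ((1 / \<Delta>) *\<^sub>R R)) ** Ri"
        by (rule matrix_scalar_ac)
      also have "\<Delta> *\<^sub>R ((1 / \<Delta>) *\<^sub>R R) = R" using Dpos by simp
      finally show ?thesis using RRi by simp
    qed
    have "Mh = Mh ** (((1 / \<Delta>) *\<^sub>R R) ** (\<Delta> *\<^sub>R Ri))" by (simp add: B)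
    also have "\<dots> = (Mh ** ((1 / \<Delta>) *\<^sub>R R)) ** (\<Delta> *\<^sub>R Ri)" by (simp add: matrix_mul_assoc)
    also have "\<dots> = \<Delta> *\<^sub>R Ri" by (simp add: A)
    finally show ?thesis .
  qed
  have Mhv: "Mh *v w = \<Delta> *\<^sub>R (Ri *v w)" for w
    unfolding Mh_eq by (rule scaleR_matrix_vector_assoc[symmetric])
  define S2 where "S2 = {norm (Mh *v w) | w. w \<in> proj_set Q C x0 \<and> norm w \<le> m}"
  have kap: "\<kappa> = (1 / m) * Sup S2"
    unfolding \<kappa>_def geom_norm_def S2_def m_def Mh_def \<Delta>_def ..
  obtain K where K: "\<And>x. norm (Mh *v x) \<le> norm x * K" "K > 0"
    using bounded_linear.pos_bounded[OF matrix_vector_mul_bounded_linear[of Mh]] by blast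
  have bddS2: "bdd_above S2"
  proof (rule bdd_aboveI)
    fix y assume "y \<in> S2"
    then obtain w where "y = norm (Mh *v w)" "norm w \<le> m" unfolding S2_def by blast
    moreover have "norm w * K \<le> m * K" using \<open>norm w \<le> m\<close> K(2) by (intro mult_right_mono) auto
    ultimately show "y \<le> m * K" using K(1)[of w] by linarith
  qed
  have keyS: "norm (Mh *v w) \<le> m * \<kappa>" if "w \<in> proj_set Q C x0" "norm w \<le> m" for w
  proof -
    have "norm (Mh *v w) \<le> Sup S2"
      using that bddS2 by (intro cSup_upper) (auto simp: S2_def)
    also have "\<dots> = m * \<kappa>" using m0 by (simp add: kap)
    finally show ?thesis .
  qed
  have kd: "\<Delta> * norm (Ri *v d) \<le> \<kappa>" if "d \<in> proj_set Q C x0" "norm d \<le> 1" for d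
  proof -
    have "m *\<^sub>R d \<in> proj_set Q C x0"
      using proj_scale[OF C_convex x0C that(1)] m0 by auto
    moreover have "norm (m *\<^sub>R d) \<le> m" using that m0 by (simp add: mult_left_le)
    ultimately have "norm (Mh *v (m *\<^sub>R d)) \<le> m * \<kappa>" by (rule keyS)
    moreover have "norm (Mh *v (m *\<^sub>R d)) = \<bar>\<Delta>\<bar> * (\<bar>m\<bar> * norm (Ri *v d))"
      by (simp only: Mhv matrix_vector_mult_scaleR norm_scaleR mult_ac)
    then have "norm (Mh *v (m *\<^sub>R d)) = m * (\<Delta> * norm (Ri *v d))"
      using m0 Dpos by simp
    ultimately show ?thesis using m0 by simp
  qed
  have ks: "norm (Ri *v s) \<le> \<kappa>" if "s \<in> proj_set Q C x0" "norm s \<le> \<Delta>" for s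
  proof -
    have t: "0 \<le> m / \<Delta>" "m / \<Delta> \<le> 1" using m0 Dpos by auto
    have "(m / \<Delta>) *\<^sub>R s \<in> proj_set Q C x0"
      using proj_scale[OF C_convex x0C that(1) t] .
    moreover have "norm ((m / \<Delta>) *\<^sub>R s) \<le> m"
    proof -
      have "norm ((m / \<Delta>) *\<^sub>R s) = (m / \<Delta>) * norm s" using m0 Dpos by simp
      also have "\<dots> \<le> (m / \<Delta>) * \<Delta>" using that(2) t by (intro mult_left_mono) auto
      also have "\<dots> = m" using Dpos by simp
      finally show ?thesis .
    qed
    ultimately have "norm (Mh *v ((m / \<Delta>) *\<^sub>R s)) \<le> m * \<kappa>" by (rule keyS)
    moreover have "norm (Mh *v ((m / \<Delta>) *\<^sub>R s)) = \<bar>\<Delta>\<bar> * (\<bar>m / \<Delta>\<bar> * norm (Ri *v s))"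
      by (simp only: Mhv matrix_vector_mult_scaleR norm_scaleR mult_ac)
    then have "norm (Mh *v ((m / \<Delta>) *\<^sub>R s)) = m * norm (Ri *v s)"
      using m0 Dpos by simp
    ultimately show ?thesis using m0 by simp
  qed
  define a where "a = transpose Q *v gradf x0"
  define \<delta> where "\<delta> = (\<chi> i. f (x0 + Q *v column i R) - f (x0 + Q *v 0))"
  define e where "e = transpose R *v a - \<delta>"
  have g_eq: "g = transpose Ri *v \<delta>"
    by (simp only: g_def simplex_grad_def pinvR \<delta>_def)
  have ag: "a - g = transpose Ri *v e"
    by (simp only: e_def matrix_vector_mult_diff_distrib matrix_vector_mul_assoc T2
        matrix_vector_mul_lid g_eq)
  have e_inner: "(a - g) \<bullet> y = e \<bullet> (Ri *v y)" for y
    unfolding ag by (rule inner_transpose)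
  have a_inner: "a \<bullet> y = gradf x0 \<bullet> (Q *v y)" for y
    unfolding a_def by (rule inner_transpose)
  have e_bound: "\<bar>e $ i\<bar> \<le> L / 2 * \<Delta>\<^sup>2" for i
  proof -
    define r where "r = column i R"
    have "e $ i = column i R \<bullet> a - (f (x0 + Q *v r) - f (x0 + Q *v 0))"
      unfolding e_def \<delta>_def r_def by (simp only: vector_minus_component col_inner vec_lambda_beta)
    then have "e $ i = gradf x0 \<bullet> (Q *v r) - (f (x0 + Q *v r) - f x0)"
      by (simp add: inner_commute[of "column i R"] a_inner r_def)
    then have "\<bar>e $ i\<bar> = \<bar>f (x0 + Q *v r) - f x0 - gradf x0 \<bullet> (Q *v r)\<bar>" by simp
    also have "\<dots> \<le> L / 2 * (norm (Q *v r))\<^sup>2" by (rule taylor_bound[OF deriv lip])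
    also have "\<dots> = L / 2 * (norm r)\<^sup>2" by (simp add: norm_Q[OF Q_orth])
    also have "\<dots> \<le> L / 2 * \<Delta>\<^sup>2"
      using col_le[of i] L0 unfolding r_def
      by (intro mult_left_mono power_mono) auto
    finally show ?thesis .
  qed
  have normE: "norm e \<le> sqrt (real CARD('p)) * (L / 2 * \<Delta>\<^sup>2)"
    by (rule norm_le_sqrt_card) (rule e_bound)
  have sp0: "0 \<le> sqrt (real CARD('p)) * (L / 2 * \<Delta>\<^sup>2)" using L0 by simp
  have P1: "\<bar>(transpose Q *v gradf (x0 + Q *v s) - g) \<bullet> d\<bar>
                 \<le> (1/2 * L * (2 + sqrt (real CARD('p)) * \<kappa>)) * \<Delta>"
    if s: "s \<in> proj_set Q C x0" "norm s \<le> \<Delta>" and d: "d \<in> proj_set Q C x0" "norm d \<le> 1" for s d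
  proof -
    have Gl: "norm (gradf (x0 + Q *v s) - gradf x0) \<le> L * \<Delta>"
    proof -
      have "norm (gradf (x0 + Q *v s) - gradf x0) \<le> L * norm (x0 + Q *v s - x0)"
        by (rule lipschitz_on_normD[OF lip]) auto
      also have "\<dots> = L * norm s" by (simp add: norm_Q[OF Q_orth])
      also have "\<dots> \<le> L * \<Delta>" using s(2) L0 by (rule mult_left_mono)
      finally show ?thesis .
    qed
    have eq: "(transpose Q *v gradf (x0 + Q *v s) - g) \<bullet> d
        = (gradf (x0 + Q *v s) - gradf x0) \<bullet> (Q *v d) + e \<bullet> (Ri *v d)"
    proof -
      have "(transpose Q *v gradf (x0 + Q *v s) - g) \<bullet> d
          = (transpose Q *v gradf (x0 + Q *v s) - a) \<bullet> d + (a - g) \<bullet> d"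
        by (simp only: inner_diff_left)
      also have "(transpose Q *v gradf (x0 + Q *v s) - a) \<bullet> d
          = (gradf (x0 + Q *v s) - gradf x0) \<bullet> (Q *v d)"
        by (simp only: a_def matrix_vector_mult_diff_distrib[symmetric] inner_transpose)
      finally show ?thesis by (simp only: e_inner)
    qed
    have b1: "\<bar>(gradf (x0 + Q *v s) - gradf x0) \<bullet> (Q *v d)\<bar> \<le> L * \<Delta> * 1"
    proof -
      have "\<bar>(gradf (x0 + Q *v s) - gradf x0) \<bullet> (Q *v d)\<bar>
          \<le> norm (gradf (x0 + Q *v s) - gradf x0) * norm (Q *v d)"
        by (rule Cauchy_Schwarz_ineq2)
      also have "\<dots> \<le> L * \<Delta> * 1"
        using Gl d(2) L0 Dpos by (intro mult_mono) (auto simp: norm_Q[OF Q_orth])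
      finally show ?thesis .
    qed
    have b2: "\<bar>e \<bullet> (Ri *v d)\<bar> \<le> sqrt (real CARD('p)) * (L / 2 * \<Delta>) * \<kappa>"
    proof -
      have "\<bar>e \<bullet> (Ri *v d)\<bar> \<le> norm e * norm (Ri *v d)"
        by (rule Cauchy_Schwarz_ineq2)
      also have "\<dots> \<le> sqrt (real CARD('p)) * (L / 2 * \<Delta>\<^sup>2) * norm (Ri *v d)"
        using normE by (intro mult_right_mono) auto
      also have "\<dots> = sqrt (real CARD('p)) * (L / 2 * \<Delta>) * (\<Delta> * norm (Ri *v d))"
        by (simp add: power2_eq_square)
      also have "\<dots> \<le> sqrt (real CARD('p)) * (L / 2 * \<Delta>) * \<kappa>"
        using kd[OF d] L0 Dpos by (intro mult_left_mono) auto
      finally show ?thesis .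
    qed
    have "(1/2 * L * (2 + sqrt (real CARD('p)) * \<kappa>)) * \<Delta>
        = L * \<Delta> * 1 + sqrt (real CARD('p)) * (L / 2 * \<Delta>) * \<kappa>"
      by (simp add: algebra_simps)
    then show "\<bar>(transpose Q *v gradf (x0 + Q *v s) - g) \<bullet> d\<bar>
                 \<le> (1/2 * L * (2 + sqrt (real CARD('p)) * \<kappa>)) * \<Delta>"
      unfolding eq using b1 b2 by linarith
  qed
  have P2: "\<bar>f (x0 + Q *v s) - mh s\<bar>
                 \<le> (1/2 * L * (1 + sqrt (real CARD('p)) * \<kappa>)) * \<Delta>\<^sup>2"
    if s: "s \<in> proj_set Q C x0" "norm s \<le> \<Delta>" for s
  proof -
    have mhs: "mh s = f x0 + g \<bullet> s" unfolding mh_def g_def ..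
    have eq: "f (x0 + Q *v s) - mh s
        = (f (x0 + Q *v s) - f x0 - gradf x0 \<bullet> (Q *v s)) + e \<bullet> (Ri *v s)"
    proof -
      have "f (x0 + Q *v s) - mh s = (f (x0 + Q *v s) - f x0 - a \<bullet> s) + (a - g) \<bullet> s"
        unfolding mhs inner_diff_left by simp
      then show ?thesis by (simp only: a_inner e_inner)
    qed
    have b1: "\<bar>f (x0 + Q *v s) - f x0 - gradf x0 \<bullet> (Q *v s)\<bar> \<le> L / 2 * \<Delta>\<^sup>2"
    proof -
      have "\<bar>f (x0 + Q *v s) - f x0 - gradf x0 \<bullet> (Q *v s)\<bar> \<le> L / 2 * (norm (Q *v s))\<^sup>2"
        by (rule taylor_bound[OF deriv lip])
      also have "\<dots> = L / 2 * (norm s)\<^sup>2" by (simp add: norm_Q[OF Q_orth])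
      also have "\<dots> \<le> L / 2 * \<Delta>\<^sup>2"
        using s(2) L0 by (intro mult_left_mono power_mono) auto
      finally show ?thesis .
    qed
    have b2: "\<bar>e \<bullet> (Ri *v s)\<bar> \<le> sqrt (real CARD('p)) * (L / 2 * \<Delta>\<^sup>2) * \<kappa>"
    proof -
      have "\<bar>e \<bullet> (Ri *v s)\<bar> \<le> norm e * norm (Ri *v s)"
        by (rule Cauchy_Schwarz_ineq2)
      also have "\<dots> \<le> sqrt (real CARD('p)) * (L / 2 * \<Delta>\<^sup>2) * \<kappa>"
        using normE ks[OF s] sp0 by (intro mult_mono) auto
      finally show ?thesis .
    qed
    have "(1/2 * L * (1 + sqrt (real CARD('p)) * \<kappa>)) * \<Delta>\<^sup>2
        = L / 2 * \<Delta>\<^sup>2 + sqrt (real CARD('p)) * (L / 2 * \<Delta>\<^sup>2) * \<kappa>"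
      by (simp add: algebra_simps)
    then show "\<bar>f (x0 + Q *v s) - mh s\<bar>
                 \<le> (1/2 * L * (1 + sqrt (real CARD('p)) * \<kappa>)) * \<Delta>\<^sup>2"
      unfolding eq using b1 b2 by linarith
  qed
  show ?thesis
    unfolding fully_linear_bounds_def
  proof (intro conjI ballI impI)
    fix s d assume "s \<in> proj_set Q C x0" "norm s \<le> \<Delta>" "d \<in> proj_set Q C x0" "norm d \<le> 1"
    then show "\<bar>(transpose Q *v gradf (x0 + Q *v s) - g) \<bullet> d\<bar>
                 \<le> (1/2 * L * (2 + sqrt (real CARD('p)) * \<kappa>)) * \<Delta>" by (rule P1)
  next
    fix s assume "s \<in> proj_set Q C x0" "norm s \<le> \<Delta>"
    then show "\<bar>f (x0 + Q *v s) - mh s\<bar>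
                 \<le> (1/2 * L * (1 + sqrt (real CARD('p)) * \<kappa>)) * \<Delta>\<^sup>2" by (rule P2)
  next
    fix s assume "s \<in> proj_set Q C x0" "norm s \<le> \<Delta>"
    then show "\<bar>f (x0 + Q *v s) - mh s\<bar>
                 \<le> (1/2 * L * (1 + sqrt (real CARD('p)) * \<kappa>)) * \<Delta>\<^sup>2" by (rule P2)
  next
    fix s d assume "s \<in> proj_set Q C x0" "norm s \<le> \<Delta>" "d \<in> proj_set Q C x0" "norm d \<le> 1"
    then show "\<bar>(transpose Q *v gradf (x0 + Q *v s) - g) \<bullet> d\<bar>
                 \<le> (1/2 * L * (2 + sqrt (real CARD('p)) * \<kappa>)) * \<Delta>" by (rule P1)
  qed
qed

end
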